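(* Let $X\subset\mathbb{R}^n$, let $F(\cdot,\xi)$ be a real-valued random function with $f(x)=\mathbb{E}[F(x,\xi)]$ finite, and let $c\in(0,1]$. For $x\in X$, $y\in\mathbb{R}$, $z>0$ define \[ \phi(x,y,z)=\frac cz\mathbb{E}[(F(x,\xi)-y)_+^2]+y+\frac c4z,\qquad \Phi(x,y)=y+c\,\mathbb{E}^{1/2}[(F(x,\xi)-y)_+^2], \] and $h(x)=f(x)+c\,\mathbb{E}^{1/2}[(F(x,\xi)-f(x))_+^2]$. Then for any $x\in X$ and $y\in\mathbb{R}$, $\inf_{z>0}\phi(x,y,z)=\Phi(x,y)$ is attained at $z=2\mathbb{E}^{1/2}[(F(x,\xi)-y)_+^2]$. Moreover, for any $x\in X$, \[ \inf_{y\ge f(x),z>0}\phi(x,y,z)=\inf_{y\ge f(x)}\Phi(x,y)=h(x), \] attained at $y=f(x)$ and $z=2\mathbb{E}^{1/2}[(F(x,\xi)-f(x))_+^2]$.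
   Context: $(a)_+=\max\{a,0\}$; $F(x,\xi)$ is assumed to have finite second moment for each $x$. *)

theory Defs
  imports "HOL-Probability.Probability"
begin

definition pos_part :: "real \<Rightarrow> real" where
  "pos_part a = max a 0"

definition mean_f :: "'a measure \<Rightarrow> ('x \<Rightarrow> 'a \<Rightarrow> real) \<Rightarrow> 'x \<Rightarrow> real" where
  "mean_f M F x = (\<integral>\<xi>. F x \<xi> \<partial>M)"

definition upsq :: "'a measure \<Rightarrow> ('x \<Rightarrow> 'a \<Rightarrow> real) \<Rightarrow> 'x \<Rightarrow> real \<Rightarrow> real" where
  "upsq M F x y = (\<integral>\<xi>. (pos_part (F x \<xi> - y))\<^sup>2 \<partial>M)"

definition phi_fun :: "'a measure \<Rightarrow> ('x \<Rightarrow> 'a \<Rightarrow> real) \<Rightarrow> real \<Rightarrow> 'x \<Rightarrow> real \<Rightarrow> real \<Rightarrow> real" where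
  "phi_fun M F c x y z = c / z * upsq M F x y + y + c / 4 * z"

definition Phi_fun :: "'a measure \<Rightarrow> ('x \<Rightarrow> 'a \<Rightarrow> real) \<Rightarrow> real \<Rightarrow> 'x \<Rightarrow> real \<Rightarrow> real" where
  "Phi_fun M F c x y = y + c * sqrt (upsq M F x y)"

definition h_fun :: "'a measure \<Rightarrow> ('x \<Rightarrow> 'a \<Rightarrow> real) \<Rightarrow> real \<Rightarrow> 'x \<Rightarrow> real" where
  "h_fun M F c x = mean_f M F x + c * sqrt (upsq M F x (mean_f M F x))"

end

theory Submission
  imports Defs
begin


lemma sq_int_le:
  fixes g :: "'a \<Rightarrow> real"
  assumes P: "prob_space M" and gm[measurable]: "g \<in> borel_measurable M"
    and gi: "integrable M (\<lambda>w. (g w)\<^sup>2)"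
  shows "(\<integral>w. g w \<partial>M)\<^sup>2 \<le> (\<integral>w. (g w)\<^sup>2 \<partial>M)"
proof -
  interpret prob_space M by fact
  have ig: "integrable M g" by (rule square_integrable_imp_integrable[OF gm gi])
  define a where "a = (\<integral>w. g w \<partial>M)"
  have "0 \<le> (\<integral>w. (g w - a)\<^sup>2 \<partial>M)" by (rule integral_nonneg_AE) simp
  also have "(\<lambda>w. (g w - a)\<^sup>2) = (\<lambda>w. (g w)\<^sup>2 - (2*a) * g w + a\<^sup>2)"
    by (auto simp: power2_eq_square algebra_simps)
  also have "(\<integral>w. (g w)\<^sup>2 - (2*a) * g w + a\<^sup>2 \<partial>M) = (\<integral>w. (g w)\<^sup>2 \<partial>M) - (2*a) * a + a\<^sup>2"
  proof -
    have i2: "integrable M (\<lambda>w. (2*a) * g w)" using ig by simp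
    have "(\<integral>w. (g w)\<^sup>2 - (2*a) * g w + a\<^sup>2 \<partial>M) = (\<integral>w. (g w)\<^sup>2 - (2*a) * g w \<partial>M) + (\<integral>w. a\<^sup>2 \<partial>M)"
      by (rule Bochner_Integration.integral_add) (use gi i2 in auto)
    also have "(\<integral>w. (g w)\<^sup>2 - (2*a) * g w \<partial>M) = (\<integral>w. (g w)\<^sup>2 \<partial>M) - (\<integral>w. (2*a) * g w \<partial>M)"
      by (rule Bochner_Integration.integral_diff[OF gi i2])
    also have "(\<integral>w. (2*a) * g w \<partial>M) = (2*a) * a" unfolding a_def by (rule integral_mult_right_zero)
    also have "(\<integral>w. a\<^sup>2 \<partial>M) = a\<^sup>2" by (simp add: prob_space)
    finally show ?thesis .
  qed
  finally show ?thesis by (simp add: a_def power2_eq_square)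
qed


lemma amgm_inf:
  fixes U y c :: real assumes U: "U \<ge> 0" and c: "c > 0"
  shows "Inf ((\<lambda>z. c / z * U + y + c / 4 * z) ` {0<..}) = y + c * sqrt U"
proof -
  let ?S = "(\<lambda>z. c / z * U + y + c / 4 * z) ` {0<..}"
  have low: "y + c * sqrt U \<le> c / z * U + y + c / 4 * z" if z: "z > 0" for z
  proof -
    have "0 \<le> (sqrt U - z/2)\<^sup>2 / z" using z by simp
    also have "(sqrt U - z/2)\<^sup>2 / z = U / z - sqrt U + z / 4"
      using z U by (simp add: power2_eq_square field_simps)
    finally have "sqrt U \<le> U / z + z / 4" by simp
    from mult_left_mono[OF this, of c] c show ?thesis by (simp add: field_simps)
  qed
  have bdd: "bdd_below ?S" proof (rule bdd_belowI)
    fix v assume "v \<in> ?S"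
    then obtain z where "z > 0" "v = c / z * U + y + c / 4 * z" by auto
    thus "y + c * sqrt U \<le> v" using low by simp
  qed
  have ge: "y + c * sqrt U \<le> Inf ?S"
    by (rule cInf_greatest) (use low in auto)
  show ?thesis
  proof (cases "U > 0")
    case True
    have mem: "c / (2 * sqrt U) * U + y + c / 4 * (2 * sqrt U) \<in> ?S" using True by (intro rev_image_eqI[of "2 * sqrt U"]) simp_all
    have eq: "c / (2 * sqrt U) * U + y + c / 4 * (2 * sqrt U) = y + c * sqrt U"
    proof -
      have s: "sqrt U > 0" using True by simp
      have "U = sqrt U * sqrt U" using U by simp
      hence "c / (2 * sqrt U) * U = c * sqrt U / 2" using s by (metis (no_types, lifting) divide_divide_eq_left' mult.commute nonzero_mult_div_cancel_left order_less_irrefl times_divide_eq_right)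
      moreover have "c / 4 * (2 * sqrt U) = c * sqrt U / 2" by simp
      ultimately show ?thesis by linarith
    qed
    have "Inf ?S \<le> y + c * sqrt U" using cInf_lower[OF mem bdd] unfolding eq .
    with ge show ?thesis by simp
  next
    case False
    hence U0: "U = 0" using U by simp
    show ?thesis
    proof (rule ccontr)
      assume "Inf ?S \<noteq> y + c * sqrt U"
      with ge U0 have gt: "Inf ?S > y" by simp
      obtain T where T: "T = Inf ?S" by blast
      define z where "z = 2 * (T - y) / c"
      have zp: "z > 0" using gt c T by (simp add: z_def)
      have mem: "c / z * U + y + c / 4 * z \<in> ?S" using zp by blast
      have "T \<le> c / z * U + y + c / 4 * z" unfolding T by (rule cInf_lower[OF mem bdd])
      also have "c / z * U + y + c / 4 * z = y + (T - y) / 2" using c U0 by (simp add: z_def)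
      finally have "T \<le> y + (T - y) / 2" .
      moreover have "T > y" using gt T by simp
      ultimately show False by (simp add: field_simps)
    qed
  qed
qed


lemma amgm_low:
  fixes U y c z :: real assumes U: "U \<ge> 0" and c: "c > 0" and z: "z > 0"
  shows "y + c * sqrt U \<le> c / z * U + y + c / 4 * z"
proof -
  have "0 \<le> (sqrt U - z/2)\<^sup>2 / z" using z by simp
  also have "(sqrt U - z/2)\<^sup>2 / z = U / z - sqrt U + z / 4"
    using z U by (simp add: power2_eq_square field_simps)
  finally have "sqrt U \<le> U / z + z / 4" by simp
  from mult_left_mono[OF this, of c] c show ?thesis by (simp add: field_simps)
qed


lemma upsq_nonneg: "upsq M F x y \<ge> 0"
  unfolding upsq_def by (rule integral_nonneg_AE) simp

lemma upsq_integrable: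
  assumes P: "prob_space M" and meas: "F x \<in> borel_measurable M" and sq: "integrable M (\<lambda>\<xi>. (F x \<xi>)\<^sup>2)"
  shows "integrable M (\<lambda>\<xi>. (pos_part (F x \<xi> - y))\<^sup>2)"
    and "(\<lambda>\<xi>. pos_part (F x \<xi> - y)) \<in> borel_measurable M"
proof -
  show gm: "(\<lambda>\<xi>. pos_part (F x \<xi> - y)) \<in> borel_measurable M"
    unfolding pos_part_def using meas by measurable
  have b: "integrable M (\<lambda>\<xi>. 2 * (F x \<xi>)\<^sup>2 + 2 * y\<^sup>2)"
  proof -
    interpret prob_space M by fact
    show ?thesis using sq by (intro Bochner_Integration.integrable_add) auto
  qed
  show "integrable M (\<lambda>\<xi>. (pos_part (F x \<xi> - y))\<^sup>2)"
  proof (rule Bochner_Integration.integrable_bound[OF b])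
    show "(\<lambda>\<xi>. (pos_part (F x \<xi> - y))\<^sup>2) \<in> borel_measurable M" using gm by measurable
    show "AE \<xi> in M. norm ((pos_part (F x \<xi> - y))\<^sup>2) \<le> norm (2 * (F x \<xi>)\<^sup>2 + 2 * y\<^sup>2)"
    proof (rule AE_I2)
      fix \<xi>
      have "(pos_part (F x \<xi> - y))\<^sup>2 \<le> 2 * (F x \<xi>)\<^sup>2 + 2 * y\<^sup>2"
      proof (cases "F x \<xi> - y \<ge> 0")
        case True
        have "(F x \<xi> - y)\<^sup>2 + (F x \<xi> + y)\<^sup>2 = 2 * (F x \<xi>)\<^sup>2 + 2 * y\<^sup>2"
          by (simp add: power2_eq_square algebra_simps)
        moreover have "(F x \<xi> + y)\<^sup>2 \<ge> 0" by simp
        ultimately have "(F x \<xi> - y)\<^sup>2 \<le> 2 * (F x \<xi>)\<^sup>2 + 2 * y\<^sup>2" by linarith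
        thus ?thesis using True by (simp add: pos_part_def)
      next
        case False thus ?thesis by (simp add: pos_part_def max_def)
      qed
      thus "norm ((pos_part (F x \<xi> - y))\<^sup>2) \<le> norm (2 * (F x \<xi>)\<^sup>2 + 2 * y\<^sup>2)" by simp
    qed
  qed
qed



lemma upsq_lip:
  assumes P: "prob_space M" and meas: "F x \<in> borel_measurable M" and sq: "integrable M (\<lambda>\<xi>. (F x \<xi>)\<^sup>2)"
    and fy: "f \<le> y"
  shows "sqrt (upsq M F x f) \<le> sqrt (upsq M F x y) + (y - f)"
proof -
  interpret prob_space M by fact
  define g where "g = (\<lambda>\<xi>. pos_part (F x \<xi> - y))"
  define d where "d = y - f"
  have d0: "d \<ge> 0" using fy by (simp add: d_def)
  have gm: "g \<in> borel_measurable M" unfolding g_def by (rule upsq_integrable(2)[of M F x, OF P meas sq])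
  have g2: "integrable M (\<lambda>\<xi>. (g \<xi>)\<^sup>2)" unfolding g_def by (rule upsq_integrable(1)[of M F x, OF P meas sq])
  have f2: "integrable M (\<lambda>\<xi>. (pos_part (F x \<xi> - f))\<^sup>2)" by (rule upsq_integrable(1)[of M F x, OF P meas sq])
  have ig: "integrable M g" by (rule square_integrable_imp_integrable[OF gm g2])
  have i2: "integrable M (\<lambda>\<xi>. (2*d) * g \<xi>)" using ig by simp
  have i3: "integrable M (\<lambda>\<xi>. (g \<xi>)\<^sup>2 + (2*d) * g \<xi>)" using g2 i2 by (rule Bochner_Integration.integrable_add)
  have i4: "integrable M (\<lambda>\<xi>. (g \<xi>)\<^sup>2 + (2*d) * g \<xi> + d\<^sup>2)" by (rule Bochner_Integration.integrable_add[OF i3]) simp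
  have pw: "(pos_part (F x \<xi> - f))\<^sup>2 \<le> (g \<xi>)\<^sup>2 + (2*d) * g \<xi> + d\<^sup>2" for \<xi>
  proof -
    have a: "pos_part (F x \<xi> - f) \<le> g \<xi> + d" "0 \<le> pos_part (F x \<xi> - f)" "0 \<le> g \<xi>"
      using fy by (auto simp: g_def d_def pos_part_def)
    have "(pos_part (F x \<xi> - f))\<^sup>2 \<le> (g \<xi> + d)\<^sup>2" using a by (intro power_mono) auto
    also have "\<dots> = (g \<xi>)\<^sup>2 + (2*d) * g \<xi> + d\<^sup>2" by (simp add: power2_eq_square algebra_simps)
    finally show ?thesis .
  qed
  have "upsq M F x f \<le> (\<integral>\<xi>. (g \<xi>)\<^sup>2 + (2*d) * g \<xi> + d\<^sup>2 \<partial>M)"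
    unfolding upsq_def by (rule integral_mono[OF f2 i4 pw])
  also have "\<dots> = (\<integral>\<xi>. (g \<xi>)\<^sup>2 + (2*d) * g \<xi> \<partial>M) + d\<^sup>2"
    using i3 by (subst Bochner_Integration.integral_add) (auto simp: prob_space)
  also have "(\<integral>\<xi>. (g \<xi>)\<^sup>2 + (2*d) * g \<xi> \<partial>M) = (\<integral>\<xi>. (g \<xi>)\<^sup>2 \<partial>M) + (2*d) * (\<integral>\<xi>. g \<xi> \<partial>M)"
    using g2 i2 by (subst Bochner_Integration.integral_add) auto
  finally have A: "upsq M F x f \<le> upsq M F x y + (2*d) * (\<integral>\<xi>. g \<xi> \<partial>M) + d\<^sup>2"
    by (simp add: upsq_def g_def)
  have "(\<integral>\<xi>. g \<xi> \<partial>M)\<^sup>2 \<le> upsq M F x y"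
    using sq_int_le[OF P gm g2] by (simp add: upsq_def g_def)
  hence B: "(\<integral>\<xi>. g \<xi> \<partial>M) \<le> sqrt (upsq M F x y)" by (rule real_le_rsqrt)
  have "upsq M F x f \<le> upsq M F x y + (2*d) * sqrt (upsq M F x y) + d\<^sup>2"
    using A mult_left_mono[OF B, of "2*d"] d0 by linarith
  also have "\<dots> = (sqrt (upsq M F x y) + d)\<^sup>2"
    using upsq_nonneg[of M F x y] by (simp add: power2_eq_square algebra_simps)
  finally have "sqrt (upsq M F x f) \<le> sqrt ((sqrt (upsq M F x y) + d)\<^sup>2)" by (rule real_sqrt_le_mono)
  also have "\<dots> = sqrt (upsq M F x y) + d" using d0 upsq_nonneg[of M F x y] by simp
  finally show ?thesis by (simp add: d_def)
qed


theorem lemma2: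
  fixes M :: "'a measure" and F :: "real^'n \<Rightarrow> 'a \<Rightarrow> real"
    and X :: "(real^'n) set" and c :: real
  assumes "prob_space M"
    and meas: "\<And>x. x \<in> X \<Longrightarrow> F x \<in> borel_measurable M"
    and sq: "\<And>x. x \<in> X \<Longrightarrow> integrable M (\<lambda>\<xi>. (F x \<xi>)\<^sup>2)"
    and "0 < c" and "c \<le> 1"
  shows
    "(\<forall>x\<in>X. \<forall>y::real.
        Inf ((\<lambda>z. phi_fun M F c x y z) ` {0<..}) = Phi_fun M F c x y
      \<and> (2 * sqrt (upsq M F x y) > 0 \<longrightarrow>
           phi_fun M F c x y (2 * sqrt (upsq M F x y)) = Phi_fun M F c x y))
   \<and> (\<forall>x\<in>X.
        Inf ((\<lambda>(y, z). phi_fun M F c x y z) ` ({mean_f M F x..} \<times> {0<..}))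
          = Inf ((\<lambda>y. Phi_fun M F c x y) ` {mean_f M F x..})
      \<and> Inf ((\<lambda>y. Phi_fun M F c x y) ` {mean_f M F x..}) = h_fun M F c x
      \<and> Phi_fun M F c x (mean_f M F x) = h_fun M F c x
      \<and> (2 * sqrt (upsq M F x (mean_f M F x)) > 0 \<longrightarrow>
           phi_fun M F c x (mean_f M F x) (2 * sqrt (upsq M F x (mean_f M F x)))
             = h_fun M F c x))"
proof -
  note P = \<open>prob_space M\<close>
  have part1: "Inf ((\<lambda>z. phi_fun M F c x y z) ` {0<..}) = Phi_fun M F c x y
      \<and> (2 * sqrt (upsq M F x y) > 0 \<longrightarrow>
           phi_fun M F c x y (2 * sqrt (upsq M F x y)) = Phi_fun M F c x y)" for x y
  proof
    show "Inf ((\<lambda>z. phi_fun M F c x y z) ` {0<..}) = Phi_fun M F c x y"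
      unfolding phi_fun_def Phi_fun_def by (rule amgm_inf[OF upsq_nonneg \<open>0 < c\<close>])
    show "2 * sqrt (upsq M F x y) > 0 \<longrightarrow>
           phi_fun M F c x y (2 * sqrt (upsq M F x y)) = Phi_fun M F c x y"
    proof
      assume pos: "2 * sqrt (upsq M F x y) > 0"
      let ?U = "upsq M F x y"
      have s: "sqrt ?U > 0" using pos by simp
      have "?U = sqrt ?U * sqrt ?U" using upsq_nonneg[of M F x y] by simp
      hence e1: "c / (2 * sqrt ?U) * ?U = c * sqrt ?U / 2" using s by (metis (no_types, lifting) divide_divide_eq_left' mult.commute nonzero_mult_div_cancel_left order_less_irrefl times_divide_eq_right)
      have e2: "c / 4 * (2 * sqrt ?U) = c * sqrt ?U / 2" by simp
      show "phi_fun M F c x y (2 * sqrt ?U) = Phi_fun M F c x y"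
        unfolding phi_fun_def Phi_fun_def using e1 e2 by linarith
    qed
  qed
  have part2: "Inf ((\<lambda>(y, z). phi_fun M F c x y z) ` ({mean_f M F x..} \<times> {0<..}))
          = Inf ((\<lambda>y. Phi_fun M F c x y) ` {mean_f M F x..})
      \<and> Inf ((\<lambda>y. Phi_fun M F c x y) ` {mean_f M F x..}) = h_fun M F c x
      \<and> Phi_fun M F c x (mean_f M F x) = h_fun M F c x
      \<and> (2 * sqrt (upsq M F x (mean_f M F x)) > 0 \<longrightarrow>
           phi_fun M F c x (mean_f M F x) (2 * sqrt (upsq M F x (mean_f M F x)))
             = h_fun M F c x)" if xX: "x \<in> X" for x
  proof -
    let ?f = "mean_f M F x"
    have hP: "Phi_fun M F c x ?f = h_fun M F c x" by (simp add: Phi_fun_def h_fun_def)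
    have mono: "Phi_fun M F c x ?f \<le> Phi_fun M F c x y" if "?f \<le> y" for y
    proof -
      have L: "sqrt (upsq M F x ?f) \<le> sqrt (upsq M F x y) + (y - ?f)"
        by (rule upsq_lip[of M F x, OF P meas[OF xX] sq[OF xX] that])
      have "c * sqrt (upsq M F x ?f) \<le> c * sqrt (upsq M F x y) + c * (y - ?f)"
        using mult_left_mono[OF L, of c] \<open>0 < c\<close> by (simp add: algebra_simps)
      moreover have "c * (y - ?f) \<le> y - ?f" using \<open>c \<le> 1\<close> that
        by (metis diff_ge_0_iff_ge mult_left_le_one_le \<open>0 < c\<close> less_imp_le)
      ultimately show ?thesis unfolding Phi_fun_def by linarith
    qed
    have Q: "Inf ((\<lambda>y. Phi_fun M F c x y) ` {?f..}) = h_fun M F c x"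
      unfolding hP[symmetric] by (rule cInf_eq_minimum) (auto intro: mono)
    let ?P = "(\<lambda>(y, z). phi_fun M F c x y z) ` ({?f..} \<times> {0<..})"
    let ?R = "(\<lambda>z. phi_fun M F c x ?f z) ` {0<..}"
    have lowP: "Phi_fun M F c x ?f \<le> v" if "v \<in> ?P" for v
    proof -
      obtain y z where yz: "y \<ge> ?f" "z > 0" "v = phi_fun M F c x y z" using \<open>v \<in> ?P\<close> by auto
      have "Phi_fun M F c x y \<le> v" unfolding yz(3) phi_fun_def Phi_fun_def
        by (rule amgm_low[OF upsq_nonneg \<open>0 < c\<close> yz(2)])
      thus ?thesis using mono[OF yz(1)] by linarith
    qed
    have bdd: "bdd_below ?P" using lowP by (auto intro!: bdd_belowI)
    have sub: "?R \<subseteq> ?P" by auto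
    have ne: "?R \<noteq> {}" by auto
    have "Inf ?P \<le> Inf ?R" by (rule cInf_superset_mono[OF ne bdd sub])
    also have "Inf ?R = Phi_fun M F c x ?f" using part1 by blast
    finally have le: "Inf ?P \<le> Phi_fun M F c x ?f" .
    have ge: "Phi_fun M F c x ?f \<le> Inf ?P"
      by (rule cInf_greatest) (use lowP in auto)
    have "Inf ?P = h_fun M F c x" using le ge hP by linarith
    with Q hP part1[of x ?f] show ?thesis by simp
  qed
  show ?thesis using part1 part2 by blast
qed

end
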